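(* If $n\ge2$ is even, there are a locally finite specular $n$-distributive variety and a locally finite specular $n$-alvin variety, neither of which is $(n-1)$-distributive. If $n\ge2$, there is a locally finite specular $n$-directed-distributive variety which is not $(n-1)$-directed-distributive.
   Context: Ternary terms $t_0,\dots,t_n$ with $t_0(x,y,z)=x$, $t_n(x,y,z)=z$, $t_h(x,y,x)=x$ for all $h$ are J\'onsson terms if $t_h(x,x,z)=t_{h+1}(x,x,z)$ for even $h$ and $t_h(x,z,z)=t_{h+1}(x,z,z)$ for odd $h$ ($0\le h<n$); alvin terms if even/odd are exchanged; directed J\'onsson terms if $t_h(x,z,z)=t_{h+1}(x,x,z)$ for all $0\le h<n$. A variety is specular $n$-distributive (specular $n$-alvin, specular $n$-directed-distributive) if it has J\'onsson (alvin, directed J\'onsson) terms $t_0,\dots,t_n$ that also satisfy $t_i(x,y,z)=t_{n-i}(z,y,x)$ for all $0\le i\le n$. $n$-distributive and $n$-directed-distributive are defined likewise without the specularity equations. *)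

theory Defs
  imports Main
begin

text \<open>Terms over a signature with operation symbols of type 'f; variables are natural numbers.
  Variable 0 is x, 1 is y, 2 is z.\<close>

datatype 'f trm = Var nat | Fn 'f "'f trm list"

fun vars :: "'f trm \<Rightarrow> nat set" where
  "vars (Var n) = {n}"
| "vars (Fn f ts) = (\<Union>t\<in>set ts. vars t)"

fun subst :: "(nat \<Rightarrow> 'f trm) \<Rightarrow> 'f trm \<Rightarrow> 'f trm" where
  "subst \<sigma> (Var n) = \<sigma> n"
| "subst \<sigma> (Fn f ts) = Fn f (map (subst \<sigma>) ts)"

inductive wf_trm :: "('f \<Rightarrow> nat) \<Rightarrow> 'f trm \<Rightarrow> bool" for ar where
  wf_var: "wf_trm ar (Var n)"
| wf_fn: "length ts = ar f \<Longrightarrow> (\<forall>t\<in>set ts. wf_trm ar t) \<Longrightarrow> wf_trm ar (Fn f ts)"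

text \<open>A variety presented by a signature (arity function ar) and a set E of
  identities; eqc ar E s t means that the identity s = t holds in the variety,
  i.e. is derivable in equational logic from E (Birkhoff).\<close>
inductive eqc :: "('f \<Rightarrow> nat) \<Rightarrow> ('f trm \<times> 'f trm) set \<Rightarrow> 'f trm \<Rightarrow> 'f trm \<Rightarrow> bool"
  for ar E where
  eqc_ax: "(s, t) \<in> E \<Longrightarrow> eqc ar E s t"
| eqc_refl: "wf_trm ar t \<Longrightarrow> eqc ar E t t"
| eqc_sym: "eqc ar E s t \<Longrightarrow> eqc ar E t s"
| eqc_trans: "eqc ar E s t \<Longrightarrow> eqc ar E t u \<Longrightarrow> eqc ar E s u"
| eqc_subst: "eqc ar E s t \<Longrightarrow> (\<forall>n. wf_trm ar (\<sigma> n)) \<Longrightarrow> eqc ar E (subst \<sigma> s) (subst \<sigma> t)"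
| eqc_cong: "length ss = ar f \<Longrightarrow> length ts = ar f \<Longrightarrow> (\<forall>i<ar f. eqc ar E (ss ! i) (ts ! i))
             \<Longrightarrow> eqc ar E (Fn f ss) (Fn f ts)"

definition variety :: "('f \<Rightarrow> nat) \<Rightarrow> ('f trm \<times> 'f trm) set \<Rightarrow> bool" where
  "variety ar E \<longleftrightarrow> (\<forall>(s, t)\<in>E. wf_trm ar s \<and> wf_trm ar t)"

text \<open>Locally finite: every free algebra on finitely many (k) generators is finite,
  i.e. the terms in variables 0..k-1 modulo the equational theory form a finite set.\<close>
definition locally_finite :: "('f \<Rightarrow> nat) \<Rightarrow> ('f trm \<times> 'f trm) set \<Rightarrow> bool" where
  "locally_finite ar E \<longleftrightarrow>
     (\<forall>k. finite ((\<lambda>t. {s. wf_trm ar s \<and> vars s \<subseteq> {..<k} \<and> eqc ar E s t})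
                   ` {t. wf_trm ar t \<and> vars t \<subseteq> {..<k}}))"

abbreviation vX :: "'f trm" where "vX \<equiv> Var 0"
abbreviation vY :: "'f trm" where "vY \<equiv> Var 1"
abbreviation vZ :: "'f trm" where "vZ \<equiv> Var 2"

definition ternary :: "('f \<Rightarrow> nat) \<Rightarrow> 'f trm \<Rightarrow> bool" where
  "ternary ar t \<longleftrightarrow> wf_trm ar t \<and> vars t \<subseteq> {0, 1, 2}"

definition app3 :: "'f trm \<Rightarrow> 'f trm \<Rightarrow> 'f trm \<Rightarrow> 'f trm \<Rightarrow> 'f trm" where
  "app3 t a b c = subst (\<lambda>i. if i = 0 then a else if i = 1 then b else if i = 2 then c else Var i) t"

definition base_terms :: "('f \<Rightarrow> nat) \<Rightarrow> ('f trm \<times> 'f trm) set \<Rightarrow> nat \<Rightarrow> (nat \<Rightarrow> 'f trm) \<Rightarrow> bool" where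
  "base_terms ar E n t \<longleftrightarrow>
     (\<forall>h\<le>n. ternary ar (t h)) \<and>
     eqc ar E (t 0) vX \<and> eqc ar E (t n) vZ \<and>
     (\<forall>h\<le>n. eqc ar E (app3 (t h) vX vY vX) vX)"

definition jonsson_terms :: "('f \<Rightarrow> nat) \<Rightarrow> ('f trm \<times> 'f trm) set \<Rightarrow> nat \<Rightarrow> (nat \<Rightarrow> 'f trm) \<Rightarrow> bool" where
  "jonsson_terms ar E n t \<longleftrightarrow> base_terms ar E n t \<and>
     (\<forall>h<n. (even h \<longrightarrow> eqc ar E (app3 (t h) vX vX vZ) (app3 (t (Suc h)) vX vX vZ)) \<and>
            (odd h \<longrightarrow> eqc ar E (app3 (t h) vX vZ vZ) (app3 (t (Suc h)) vX vZ vZ)))"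

definition alvin_terms :: "('f \<Rightarrow> nat) \<Rightarrow> ('f trm \<times> 'f trm) set \<Rightarrow> nat \<Rightarrow> (nat \<Rightarrow> 'f trm) \<Rightarrow> bool" where
  "alvin_terms ar E n t \<longleftrightarrow> base_terms ar E n t \<and>
     (\<forall>h<n. (odd h \<longrightarrow> eqc ar E (app3 (t h) vX vX vZ) (app3 (t (Suc h)) vX vX vZ)) \<and>
            (even h \<longrightarrow> eqc ar E (app3 (t h) vX vZ vZ) (app3 (t (Suc h)) vX vZ vZ)))"

definition directed_jonsson_terms :: "('f \<Rightarrow> nat) \<Rightarrow> ('f trm \<times> 'f trm) set \<Rightarrow> nat \<Rightarrow> (nat \<Rightarrow> 'f trm) \<Rightarrow> bool" where
  "directed_jonsson_terms ar E n t \<longleftrightarrow> base_terms ar E n t \<and>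
     (\<forall>h<n. eqc ar E (app3 (t h) vX vZ vZ) (app3 (t (Suc h)) vX vX vZ))"

definition specular :: "('f \<Rightarrow> nat) \<Rightarrow> ('f trm \<times> 'f trm) set \<Rightarrow> nat \<Rightarrow> (nat \<Rightarrow> 'f trm) \<Rightarrow> bool" where
  "specular ar E n t \<longleftrightarrow> (\<forall>i\<le>n. eqc ar E (t i) (app3 (t (n - i)) vZ vY vX))"

definition n_distributive where
  "n_distributive ar E n \<longleftrightarrow> (\<exists>t. jonsson_terms ar E n t)"
definition n_directed_distributive where
  "n_directed_distributive ar E n \<longleftrightarrow> (\<exists>t. directed_jonsson_terms ar E n t)"
definition specular_n_distributive where
  "specular_n_distributive ar E n \<longleftrightarrow> (\<exists>t. jonsson_terms ar E n t \<and> specular ar E n t)"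
definition specular_n_alvin where
  "specular_n_alvin ar E n \<longleftrightarrow> (\<exists>t. alvin_terms ar E n t \<and> specular ar E n t)"
definition specular_n_directed_distributive where
  "specular_n_directed_distributive ar E n \<longleftrightarrow> (\<exists>t. directed_jonsson_terms ar E n t \<and> specular ar E n t)"

end

theory Submission
  imports Defs "HOL-Library.FuncSet"
begin


fun ev :: "('f \<Rightarrow> 'a list \<Rightarrow> 'a) \<Rightarrow> (nat \<Rightarrow> 'a) \<Rightarrow> 'f trm \<Rightarrow> 'a" where
  "ev I v (Var k) = v k"
| "ev I v (Fn f ts) = I f (map (ev I v) ts)"

lemma ev_subst: "ev I v (subst \<sigma> t) = ev I (\<lambda>k. ev I v (\<sigma> k)) t"
  by (induction t) (simp_all add: comp_def cong: map_cong)

lemma ev_local: "(\<forall>k\<in>vars t. v k = v' k) \<Longrightarrow> ev I v t = ev I v' t"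
  by (induction t) (simp_all, metis (mono_tags, lifting) map_eq_conv)

lemma ev_closed:
  assumes "\<And>f xs. (\<forall>x\<in>set xs. P x) \<Longrightarrow> P (I f xs)" and "\<forall>k. P (v k)"
  shows "P (ev I v t)"
  using assms(2) by (induction t) (auto intro!: assms(1))

lemma wf_subst: "wf_trm ar t \<Longrightarrow> (\<forall>k. wf_trm ar (\<sigma> k)) \<Longrightarrow> wf_trm ar (subst \<sigma> t)"
  by (induction rule: wf_trm.induct) (auto intro!: wf_trm.intros)

lemma sound:
  assumes "eqc ar E s t"
    and "\<forall>(a,b)\<in>E. \<forall>v. Q v \<longrightarrow> ev I v a = ev I v b"
    and "\<And>v \<sigma>. Q v \<Longrightarrow> Q (\<lambda>k. ev I v (\<sigma> k))"
  shows "Q v \<Longrightarrow> ev I v s = ev I v t"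
  using assms(1)
proof (induction arbitrary: v rule: eqc.induct)
  case (eqc_ax s t)
  then show ?case using assms(2) by auto
next
  case (eqc_subst s t \<sigma>)
  then show ?case by (simp add: ev_subst assms(3))
next
  case (eqc_cong ss f ts)
  have "map (ev I v) ss = map (ev I v) ts"
    using eqc_cong by (intro nth_equalityI) auto
  then show ?case by simp
qed auto

lemma ev_app3: "ev I v (app3 t (Var i) (Var j) (Var l)) =
   ev I (\<lambda>k. if k = 0 then v i else if k = 1 then v j else if k = 2 then v l else v k) t"
  unfolding app3_def ev_subst by (rule arg_cong[where f="\<lambda>w. ev I w t"]) auto



datatype mode = MD | MJ | MA

definition clampi :: "int \<Rightarrow> int \<Rightarrow> int \<Rightarrow> int" where
  "clampi k x z = max x (min k z)"

definition kf :: "mode \<Rightarrow> nat \<Rightarrow> bool \<Rightarrow> int" where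
  "kf m h e = (case m of
       MD \<Rightarrow> int h - 1 + (if e then 1 else 0)
     | MJ \<Rightarrow> (if odd h then int h - 1 + (if e then 1 else 0) else int h - (if e then 1 else 0))
     | MA \<Rightarrow> (if odd h then int h - (if e then 1 else 0) else int h - 1 + (if e then 1 else 0)))"

definition tB :: "mode \<Rightarrow> nat \<Rightarrow> nat \<Rightarrow> int \<Rightarrow> int \<Rightarrow> int \<Rightarrow> int" where
  "tB m n h x y z = (if x \<le> z then clampi (kf m h (y = z)) x z else clampi (kf m (n - h) (y = x)) z x)"

definition tC :: "mode \<Rightarrow> nat \<Rightarrow> nat \<Rightarrow> bool \<Rightarrow> bool \<Rightarrow> bool \<Rightarrow> bool" where
  "tC m n h x y z = (if m = MA
      then (x \<or> z) \<and> (h = 1 \<longrightarrow> x \<or> (\<not> y \<and> z)) \<and> (h = n - 1 \<longrightarrow> z \<or> (\<not> y \<and> x))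
      else (x \<or> z) \<and> (h = 1 \<longrightarrow> x \<or> y) \<and> (h = n - 1 \<longrightarrow> y \<or> z))"

definition sB :: "mode \<Rightarrow> nat \<Rightarrow> nat \<Rightarrow> int \<Rightarrow> int \<Rightarrow> int \<Rightarrow> int" where
  "sB m n h x y z = (if h = 0 then x else if h = n then z else if h < n then tB m n h x y z else x)"

definition sC :: "mode \<Rightarrow> nat \<Rightarrow> nat \<Rightarrow> bool \<Rightarrow> bool \<Rightarrow> bool \<Rightarrow> bool" where
  "sC m n h x y z = (if h = 0 then x else if h = n then z else if h < n then tC m n h x y z else x)"

lemma kf_bounds: "int h - 1 \<le> kf m h e \<and> kf m h e \<le> int h"
  by (cases m) (auto simp: kf_def)

lemma kf_diff: "\<bar>kf m h e - kf m h e'\<bar> \<le> 1"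
  by (cases m) (auto simp: kf_def)

lemma sB_idem: "sB m n h x y x = x"
  by (auto simp: sB_def tB_def clampi_def)

lemma sC_idem: "sC m n h x y x = x"
  by (auto simp: sC_def tC_def)

lemma sB_spec: "0 < n \<Longrightarrow> h \<le> n \<Longrightarrow> sB m n h x y z = sB m n (n - h) z y x"
  by (auto simp: sB_def tB_def clampi_def)

lemma sC_spec: "0 < n \<Longrightarrow> h \<le> n \<Longrightarrow> sC m n h x y z = sC m n (n - h) z y x"
  by (auto simp: sC_def tC_def)

lemma par: "even (n::nat) \<Longrightarrow> h \<le> n \<Longrightarrow> odd (n - h) = odd h"
  by presburger

lemma par2: "even (n::nat) \<Longrightarrow> 2 \<le> n \<Longrightarrow> odd (n - 1)"
  by presburger

lemma tB_le: "x \<le> z \<Longrightarrow> tB m n h x y z = clampi (kf m h (y = z)) x z"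
  by (simp add: tB_def)

lemma tB_gt: "z < x \<Longrightarrow> tB m n h x y z = clampi (kf m (n - h) (y = x)) z x"
  by (simp add: tB_def)

lemma tB_eqxz: "tB m n h x y x = x"
  by (simp add: tB_def clampi_def)

lemma clamp_lo: "k \<le> x \<Longrightarrow> x \<le> z \<Longrightarrow> clampi k x z = x"
  by (simp add: clampi_def)

lemma clamp_hi: "z \<le> k \<Longrightarrow> x \<le> z \<Longrightarrow> clampi k x z = z"
  by (simp add: clampi_def)

lemma sB_chainD:
  assumes "2 \<le> n" "h < n" "0 \<le> x" "x \<le> int n - 1" "0 \<le> z" "z \<le> int n - 1"
  shows "sB MD n h x z z = sB MD n (Suc h) x x z"
proof (cases "x = z")
  case True then show ?thesis by (simp add: sB_def tB_eqxz)
next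
  case False
  have k1: "kf MD h True = kf MD (Suc h) False" by (simp add: kf_def)
  have k2: "kf MD (n - h) False = kf MD (n - Suc h) True" using assms by (simp add: kf_def)
  show ?thesis
  proof (cases "h = 0")
    case True
    then show ?thesis using assms False
      by (cases "x < z") (auto simp: sB_def tB_le tB_gt kf_def clampi_def)
  next
    case h0: False
    show ?thesis
    proof (cases "Suc h = n")
      case True
      then show ?thesis using assms False h0
        by (cases "x < z") (auto simp: sB_def tB_le tB_gt kf_def clampi_def)
    next
      case False
      then show ?thesis using assms \<open>x \<noteq> z\<close> h0 k1 k2
        by (cases "x < z") (auto simp: sB_def tB_le tB_gt)
    qed
  qed
qed


lemma sB_chain_MJ_L:
  assumes "2 \<le> n" "even n" "h < n" "even h" "0 \<le> x" "x \<le> int n - 1" "0 \<le> z" "z \<le> int n - 1"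
  shows "sB MJ n h x x z = sB MJ n (Suc h) x x z"
proof (cases "x = z")
  case True then show ?thesis by (simp add: sB_def tB_eqxz)
next
  case False
  have p: "odd (n - h) = odd h" "odd (n - Suc h) = odd (Suc h)" using assms par by auto
  have p2: "odd (n - 1)" using assms par2 by auto
  have k1: "kf MJ h False = kf MJ (Suc h) False" using assms by (simp add: kf_def)
  have k2: "kf MJ (n - h) True = kf MJ (n - Suc h) True" using assms p by (simp add: kf_def)
  show ?thesis
  proof (cases "h = 0")
    case True
    then show ?thesis using assms False p2
      by (cases "x < z") (auto simp: sB_def tB_le tB_gt kf_def clampi_def)
  next
    case h0: False
    show ?thesis
    proof (cases "Suc h = n")
      case True
      then show ?thesis using assms False h0 p2
        by (cases "x < z") (auto simp: sB_def tB_le tB_gt kf_def clampi_def)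
    next
      case False
      then show ?thesis using assms \<open>x \<noteq> z\<close> h0 k1 k2
        by (cases "x < z") (auto simp: sB_def tB_le tB_gt)
    qed
  qed
qed

lemma sB_chain_MJ_R:
  assumes "2 \<le> n" "even n" "h < n" "odd h" "0 \<le> x" "x \<le> int n - 1" "0 \<le> z" "z \<le> int n - 1"
  shows "sB MJ n h x z z = sB MJ n (Suc h) x z z"
proof (cases "x = z")
  case True then show ?thesis by (simp add: sB_def tB_eqxz)
next
  case False
  have p: "odd (n - h) = odd h" "odd (n - Suc h) = odd (Suc h)" using assms par by auto
  have p2: "odd (n - 1)" using assms par2 by auto
  have k1: "kf MJ h True = kf MJ (Suc h) True" using assms by (simp add: kf_def)
  have k2: "kf MJ (n - h) False = kf MJ (n - Suc h) False" using assms p by (simp add: kf_def)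
  show ?thesis
  proof (cases "h = 0")
    case True
    then show ?thesis using assms False p2
      by (cases "x < z") (auto simp: sB_def tB_le tB_gt kf_def clampi_def)
  next
    case h0: False
    show ?thesis
    proof (cases "Suc h = n")
      case True
      then show ?thesis using assms False h0 p2
        by (cases "x < z") (auto simp: sB_def tB_le tB_gt kf_def clampi_def)
    next
      case False
      then show ?thesis using assms \<open>x \<noteq> z\<close> h0 k1 k2
        by (cases "x < z") (auto simp: sB_def tB_le tB_gt)
    qed
  qed
qed

lemma sB_chain_MA_L:
  assumes "2 \<le> n" "even n" "h < n" "odd h" "0 \<le> x" "x \<le> int n - 1" "0 \<le> z" "z \<le> int n - 1"
  shows "sB MA n h x x z = sB MA n (Suc h) x x z"
proof (cases "x = z")
  case True then show ?thesis by (simp add: sB_def tB_eqxz)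
next
  case False
  have p: "odd (n - h) = odd h" "odd (n - Suc h) = odd (Suc h)" using assms par by auto
  have p2: "odd (n - 1)" using assms par2 by auto
  have k1: "kf MA h False = kf MA (Suc h) False" using assms by (simp add: kf_def)
  have k2: "kf MA (n - h) True = kf MA (n - Suc h) True" using assms p by (simp add: kf_def)
  show ?thesis
  proof (cases "h = 0")
    case True
    then show ?thesis using assms False p2
      by (cases "x < z") (auto simp: sB_def tB_le tB_gt kf_def clampi_def)
  next
    case h0: False
    show ?thesis
    proof (cases "Suc h = n")
      case True
      then show ?thesis using assms False h0 p2
        by (cases "x < z") (auto simp: sB_def tB_le tB_gt kf_def clampi_def)
    next
      case False
      then show ?thesis using assms \<open>x \<noteq> z\<close> h0 k1 k2
        by (cases "x < z") (auto simp: sB_def tB_le tB_gt)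
    qed
  qed
qed

lemma sB_chain_MA_R:
  assumes "2 \<le> n" "even n" "h < n" "even h" "0 \<le> x" "x \<le> int n - 1" "0 \<le> z" "z \<le> int n - 1"
  shows "sB MA n h x z z = sB MA n (Suc h) x z z"
proof (cases "x = z")
  case True then show ?thesis by (simp add: sB_def tB_eqxz)
next
  case False
  have p: "odd (n - h) = odd h" "odd (n - Suc h) = odd (Suc h)" using assms par by auto
  have p2: "odd (n - 1)" using assms par2 by auto
  have k1: "kf MA h True = kf MA (Suc h) True" using assms by (simp add: kf_def)
  have k2: "kf MA (n - h) False = kf MA (n - Suc h) False" using assms p by (simp add: kf_def)
  show ?thesis
  proof (cases "h = 0")
    case True
    then show ?thesis using assms False p2
      by (cases "x < z") (auto simp: sB_def tB_le tB_gt kf_def clampi_def)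
  next
    case h0: False
    show ?thesis
    proof (cases "Suc h = n")
      case True
      then show ?thesis using assms False h0 p2
        by (cases "x < z") (auto simp: sB_def tB_le tB_gt kf_def clampi_def)
    next
      case False
      then show ?thesis using assms \<open>x \<noteq> z\<close> h0 k1 k2
        by (cases "x < z") (auto simp: sB_def tB_le tB_gt)
    qed
  qed
qed

lemma sC_chainD: "2 \<le> n \<Longrightarrow> h < n \<Longrightarrow> sC MD n h x z z = sC MD n (Suc h) x x z"
  by (auto simp: sC_def tC_def)

lemma sC_chainJ: "2 \<le> n \<Longrightarrow> even n \<Longrightarrow> h < n \<Longrightarrow>
   (even h \<longrightarrow> sC MJ n h x x z = sC MJ n (Suc h) x x z) \<and> (odd h \<longrightarrow> sC MJ n h x z z = sC MJ n (Suc h) x z z)"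
proof -
  assume a: "2 \<le> n" "even n" "h < n"
  have "odd h \<Longrightarrow> Suc h \<noteq> n - 1" using a by presburger
  moreover have "even h \<Longrightarrow> h \<noteq> n - 1" using a by presburger
  ultimately show ?thesis using a by (auto simp: sC_def tC_def)
qed

lemma sC_chainA: "2 \<le> n \<Longrightarrow> even n \<Longrightarrow> h < n \<Longrightarrow>
   (odd h \<longrightarrow> sC MA n h x x z = sC MA n (Suc h) x x z) \<and> (even h \<longrightarrow> sC MA n h x z z = sC MA n (Suc h) x z z)"
proof -
  assume a: "2 \<le> n" "even n" "h < n"
  have "odd h \<Longrightarrow> Suc h \<noteq> n - 1" using a by presburger
  moreover have "even h \<Longrightarrow> h \<noteq> n - 1" using a by presburger
  ultimately show ?thesis using a by (auto simp: sC_def tC_def)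
qed



lemma clamp_lip: "\<bar>k - k'\<bar> \<le> 1 \<Longrightarrow> \<bar>x - x'\<bar> \<le> 1 \<Longrightarrow> \<bar>z - z'\<bar> \<le> 1 \<Longrightarrow>
   \<bar>clampi k x z - clampi k' x' z'\<bar> \<le> (1::int)"
  unfolding clampi_def by (simp add: max_def min_def abs_if split: if_splits)

lemma clamp_mixed: "x \<le> z \<Longrightarrow> z' < x' \<Longrightarrow> \<bar>x - x'\<bar> \<le> 1 \<Longrightarrow> \<bar>z - z'\<bar> \<le> 1 \<Longrightarrow>
   \<bar>clampi k x z - clampi k' z' x'\<bar> \<le> (1::int)"
  unfolding clampi_def by (simp add: max_def min_def abs_if split: if_splits)

lemma P13: "\<bar>x - x'\<bar> \<le> 1 \<Longrightarrow> \<bar>z - z'\<bar> \<le> 1 \<Longrightarrow> \<bar>tB m n h x y z - tB m n h x' y' z'\<bar> \<le> 1"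
proof -
  assume a: "\<bar>x - x'\<bar> \<le> 1" "\<bar>z - z'\<bar> \<le> 1"
  consider "x \<le> z" "x' \<le> z'" | "x \<le> z" "z' < x'" | "z < x" "x' \<le> z'" | "z < x" "z' < x'" by linarith
  then show ?thesis
  proof cases
    case 1 then show ?thesis using a by (simp add: tB_le clamp_lip kf_diff)
  next
    case 2 then show ?thesis using a by (simp add: tB_le tB_gt clamp_mixed)
  next
    case 3
    then have "\<bar>tB m n h x' y' z' - tB m n h x y z\<bar> \<le> 1"
      using a by (simp add: tB_le tB_gt clamp_mixed abs_minus_commute)
    then show ?thesis by (simp add: abs_minus_commute)
  next
    case 4 then show ?thesis using a by (simp add: tB_gt clamp_lip kf_diff abs_minus_commute)
  qed
qed

lemma tB_spec: "h \<le> n \<Longrightarrow> tB m n h x y z = tB m n (n - h) z y x"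
  by (auto simp: tB_def clampi_def)

lemma tB1_shape:
  assumes "2 \<le> n" "0 \<le> x" "x \<le> int n - 1" "0 \<le> z" "z \<le> int n - 1"
  shows "tB m n 1 x y z = x \<or> (x = 0 \<and> 0 \<le> tB m n 1 x y z \<and> tB m n 1 x y z \<le> 1) \<or>
         (x = int n - 1 \<and> int n - 2 \<le> tB m n 1 x y z \<and> tB m n 1 x y z \<le> int n - 1)"
proof -
  have b1: "0 \<le> kf m 1 e \<and> kf m 1 e \<le> 1" for e using kf_bounds[of 1 m e] by simp
  have b2: "int n - 2 \<le> kf m (n - 1) e \<and> kf m (n - 1) e \<le> int n - 1" for e
    using kf_bounds[of "n - 1" m e] assms by simp
  show ?thesis
  proof (cases "x \<le> z")
    case True then show ?thesis using b1[of "y = z"] assms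
      by (simp add: tB_le clampi_def max_def min_def; arith)
  next
    case False then show ?thesis using b2[of "y = x"] assms
      by (simp add: tB_gt clampi_def max_def min_def; arith)
  qed
qed

lemma P1:
  assumes "2 \<le> n" "0 \<le> x" "x \<le> int n - 1" "0 \<le> z" "z \<le> int n - 1"
    "0 \<le> x'" "x' \<le> int n - 1" "0 \<le> z'" "z' \<le> int n - 1" "\<bar>x - x'\<bar> \<le> 1"
  shows "\<bar>tB m n 1 x y z - tB m n 1 x' y' z'\<bar> \<le> 1"
  using tB1_shape[of n x z m y] tB1_shape[of n x' z' m y'] assms by linarith

lemma P3:
  assumes "2 \<le> n" "0 \<le> x" "x \<le> int n - 1" "0 \<le> z" "z \<le> int n - 1"
    "0 \<le> x'" "x' \<le> int n - 1" "0 \<le> z'" "z' \<le> int n - 1" "\<bar>z - z'\<bar> \<le> 1"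
  shows "\<bar>tB m n (n - 1) x y z - tB m n (n - 1) x' y' z'\<bar> \<le> 1"
proof -
  have "n - (n - 1) = 1" using assms by simp
  then show ?thesis using P1[of n z x z' x' m y y'] assms tB_spec[of "n - 1" n m] by simp
qed

lemma op_compat:
  assumes "2 \<le> n" "1 \<le> h" "h < n"
    "0 \<le> u1" "u1 \<le> int n - 1" "0 \<le> u3" "u3 \<le> int n - 1"
    "0 \<le> w1" "w1 \<le> int n - 1" "0 \<le> w3" "w3 \<le> int n - 1"
    "\<not> tC m n h c1 c2 c3" "\<not> c1 \<longrightarrow> \<bar>u1 - w1\<bar> \<le> 1" "\<not> c3 \<longrightarrow> \<bar>u3 - w3\<bar> \<le> 1"
  shows "\<bar>tB m n h u1 u2 u3 - tB m n h w1 w2 w3\<bar> \<le> 1"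
proof -
  have "(\<not> c1 \<and> \<not> c3) \<or> (h = 1 \<and> \<not> c1) \<or> (h = n - 1 \<and> \<not> c3)"
    using assms(12) by (auto simp: tC_def split: if_splits)
  then show ?thesis
    using assms P13[of u1 w1 u3 w3 m n h u2 w2] P1[of n u1 u3 w1 w3 m u2 w2] P3[of n u1 u3 w1 w3 m u2 w2]
    by auto
qed



definition ar3 :: "nat \<Rightarrow> nat" where "ar3 = (\<lambda>_. 3)"

definition opB :: "mode \<Rightarrow> nat \<Rightarrow> nat \<Rightarrow> int list \<Rightarrow> int" where
  "opB m n f xs = (case xs of [a, b, c] \<Rightarrow> (if 1 \<le> f \<and> f < n then tB m n f a b c else a) | _ \<Rightarrow> 0)"

definition opC :: "mode \<Rightarrow> nat \<Rightarrow> nat \<Rightarrow> bool list \<Rightarrow> bool" where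
  "opC m n f xs = (case xs of [a, b, c] \<Rightarrow> (if 1 \<le> f \<and> f < n then tC m n f a b c else a) | _ \<Rightarrow> False)"

definition bnd :: "nat \<Rightarrow> (nat \<Rightarrow> int) \<Rightarrow> bool" where
  "bnd n v \<longleftrightarrow> (\<forall>k. 0 \<le> v k \<and> v k \<le> int n - 1)"

definition EE :: "mode \<Rightarrow> nat \<Rightarrow> (nat trm \<times> nat trm) set" where
  "EE m n = {(s, t). wf_trm ar3 s \<and> wf_trm ar3 t \<and> (\<forall>v. ev (opC m n) v s = ev (opC m n) v t) \<and>
      (\<forall>v. bnd n v \<longrightarrow> ev (opB m n) v s = ev (opB m n) v t)}"

lemma opB3[simp]: "opB m n f [a, b, c] = (if 1 \<le> f \<and> f < n then tB m n f a b c else a)"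
  by (simp add: opB_def)

lemma opC3[simp]: "opC m n f [a, b, c] = (if 1 \<le> f \<and> f < n then tC m n f a b c else a)"
  by (simp add: opC_def)

lemma variety_EE: "variety ar3 (EE m n)"
  by (auto simp: variety_def EE_def)

lemma tB_range: "0 \<le> x \<Longrightarrow> x \<le> N \<Longrightarrow> 0 \<le> z \<Longrightarrow> z \<le> N \<Longrightarrow> 0 \<le> tB m n h x y z \<and> tB m n h x y z \<le> N"
  by (auto simp: tB_def clampi_def)

lemma evB_bnd: "1 \<le> n \<Longrightarrow> bnd n v \<Longrightarrow> 0 \<le> ev (opB m n) v t \<and> ev (opB m n) v t \<le> int n - 1"
proof (rule ev_closed[where P = "\<lambda>x. 0 \<le> x \<and> x \<le> int n - 1"])
  fix f and xs :: "int list"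
  assume n: "1 \<le> n" and a: "\<forall>x\<in>set xs. 0 \<le> x \<and> x \<le> int n - 1"
  show "0 \<le> opB m n f xs \<and> opB m n f xs \<le> int n - 1"
    using a n tB_range[of _ "int n - 1"] by (auto simp: opB_def split: list.splits)
qed (auto simp: bnd_def)

lemma bnd_closed: "1 \<le> n \<Longrightarrow> bnd n v \<Longrightarrow> bnd n (\<lambda>k. ev (opB m n) v (\<sigma> k))"
  using evB_bnd by (simp add: bnd_def)

lemma soundB: "eqc ar3 (EE m n) s t \<Longrightarrow> 1 \<le> n \<Longrightarrow> bnd n v \<Longrightarrow> ev (opB m n) v s = ev (opB m n) v t"
  by (rule sound[where Q = "bnd n"]) (auto simp: EE_def bnd_closed)

lemma soundC: "eqc ar3 (EE m n) s t \<Longrightarrow> ev (opC m n) v s = ev (opC m n) v t"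
  by (rule sound[where Q = "\<lambda>_. True"]) (auto simp: EE_def)

lemma eqcI: "wf_trm ar3 s \<Longrightarrow> wf_trm ar3 t \<Longrightarrow> (\<And>v. ev (opC m n) v s = ev (opC m n) v t) \<Longrightarrow>
  (\<And>v. bnd n v \<Longrightarrow> ev (opB m n) v s = ev (opB m n) v t) \<Longrightarrow> eqc ar3 (EE m n) s t"
  by (rule eqc_ax) (auto simp: EE_def)

lemma term_compat:
  assumes "wf_trm ar3 t" "2 \<le> n" "bnd n v1" "bnd n v2" "\<forall>k. \<not> vc k \<longrightarrow> \<bar>v1 k - v2 k\<bar> \<le> 1"
  shows "\<not> ev (opC m n) vc t \<Longrightarrow> \<bar>ev (opB m n) v1 t - ev (opB m n) v2 t\<bar> \<le> 1"
  using assms(1)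
proof (induction rule: wf_trm.induct)
  case (wf_var k)
  then show ?case using assms by auto
next
  case (wf_fn ts f)
  then obtain a b c where ts: "ts = [a, b, c]"
    by (auto simp: ar3_def numeral_3_eq_3 length_Suc_conv)
  have IH: "\<And>u. u \<in> {a, b, c} \<Longrightarrow> \<not> ev (opC m n) vc u \<Longrightarrow> \<bar>ev (opB m n) v1 u - ev (opB m n) v2 u\<bar> \<le> 1"
    using wf_fn ts by auto
  have bd: "\<And>u v. bnd n v \<Longrightarrow> 0 \<le> ev (opB m n) v u \<and> ev (opB m n) v u \<le> int n - 1"
    using evB_bnd assms(2) by auto
  show ?case
  proof (cases "1 \<le> f \<and> f < n")
    case True
    let ?B1 = "ev (opB m n) v1" and ?B2 = "ev (opB m n) v2" and ?C = "ev (opC m n) vc"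
    have nC: "\<not> tC m n f (?C a) (?C b) (?C c)" using wf_fn.prems True by (simp add: ts)
    have "\<bar>tB m n f (?B1 a) (?B1 b) (?B1 c) - tB m n f (?B2 a) (?B2 b) (?B2 c)\<bar> \<le> 1"
      apply (rule op_compat[OF assms(2) _ _ _ _ _ _ _ _ _ _ nC])
      using True IH[of a] IH[of c] bd[OF assms(3), of a] bd[OF assms(3), of c]
        bd[OF assms(4), of a] bd[OF assms(4), of c] by auto
    then show ?thesis using True by (simp add: ts)
  next
    case False
    then show ?thesis using wf_fn.prems IH[of a] by (auto simp: ts)
  qed
qed



definition T :: "nat \<Rightarrow> nat \<Rightarrow> nat trm" where
  "T n h = (if h = 0 then Var 0 else if h = n then Var 2 else Fn h [Var 0, Var 1, Var 2])"

lemma wf_T: "wf_trm ar3 (T n h)"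
  by (simp add: T_def ar3_def wf_var wf_fn)

lemma ternary_T: "ternary ar3 (T n h)"
  by (simp add: ternary_def wf_T) (auto simp: T_def)

lemma wf_app3: "wf_trm ar3 t \<Longrightarrow> wf_trm ar3 (app3 t (Var i) (Var j) (Var l))"
  unfolding app3_def by (rule wf_subst) (auto intro: wf_trm.intros)

lemma evB_T: "ev (opB m n) v (T n h) = sB m n h (v 0) (v 1) (v 2)"
  by (auto simp: T_def sB_def)

lemma evC_T: "ev (opC m n) v (T n h) = sC m n h (v 0) (v 1) (v 2)"
  by (auto simp: T_def sC_def)

lemma evB_T3: "ev (opB m n) v (app3 (T n h) (Var i) (Var j) (Var l)) = sB m n h (v i) (v j) (v l)"
  by (simp add: ev_app3 evB_T)

lemma evC_T3: "ev (opC m n) v (app3 (T n h) (Var i) (Var j) (Var l)) = sC m n h (v i) (v j) (v l)"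
  by (simp add: ev_app3 evC_T)

lemma bndD: "bnd n v \<Longrightarrow> 0 \<le> v k \<and> v k \<le> int n - 1"
  by (simp add: bnd_def)

lemma base_T: "2 \<le> n \<Longrightarrow> base_terms ar3 (EE m n) n (T n)"
  unfolding base_terms_def
proof (intro conjI allI impI)
  assume n: "2 \<le> n"
  show "ternary ar3 (T n h)" for h by (rule ternary_T)
  show "eqc ar3 (EE m n) (T n 0) vX" by (simp add: T_def eqc_refl wf_var)
  show "eqc ar3 (EE m n) (T n n) vZ" using n by (simp add: T_def eqc_refl wf_var)
  show "eqc ar3 (EE m n) (app3 (T n h) vX vY vX) vX" for h
    by (rule eqcI) (auto simp: wf_app3 wf_T wf_var evB_T3 evC_T3 sB_idem sC_idem)
qed

lemma spec_T: "2 \<le> n \<Longrightarrow> specular ar3 (EE m n) n (T n)"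
  unfolding specular_def
proof (intro allI impI)
  fix i assume "2 \<le> n" "i \<le> n"
  then show "eqc ar3 (EE m n) (T n i) (app3 (T n (n - i)) vZ vY vX)"
    by (intro eqcI) (auto simp: wf_app3 wf_T evB_T3 evC_T3 evB_T evC_T sB_spec[of n i m] sC_spec[of n i m])
qed

lemma dir_T: "2 \<le> n \<Longrightarrow> directed_jonsson_terms ar3 (EE MD n) n (T n)"
  unfolding directed_jonsson_terms_def
proof (intro conjI allI impI base_T)
  fix h assume n: "2 \<le> n" and h: "h < n"
  show "eqc ar3 (EE MD n) (app3 (T n h) vX vZ vZ) (app3 (T n (Suc h)) vX vX vZ)"
    by (intro eqcI) (auto simp: wf_app3 wf_T evB_T3 evC_T3 n h sC_chainD intro!: sB_chainD dest: bndD)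
qed

lemma jon_T: "2 \<le> n \<Longrightarrow> even n \<Longrightarrow> jonsson_terms ar3 (EE MJ n) n (T n)"
  unfolding jonsson_terms_def
proof (intro conjI allI impI base_T)
  fix h assume n: "2 \<le> n" "even n" and h: "h < n"
  show "eqc ar3 (EE MJ n) (app3 (T n h) vX vX vZ) (app3 (T n (Suc h)) vX vX vZ)" if "even h"
    using that sC_chainJ[OF n(1) n(2) h]
    by (intro eqcI) (auto simp: wf_app3 wf_T evB_T3 evC_T3 n h intro!: sB_chain_MJ_L dest: bndD)
  show "eqc ar3 (EE MJ n) (app3 (T n h) vX vZ vZ) (app3 (T n (Suc h)) vX vZ vZ)" if "odd h"
    using that sC_chainJ[OF n(1) n(2) h]
    by (intro eqcI) (auto simp: wf_app3 wf_T evB_T3 evC_T3 n h intro!: sB_chain_MJ_R dest: bndD)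
qed

lemma alv_T: "2 \<le> n \<Longrightarrow> even n \<Longrightarrow> alvin_terms ar3 (EE MA n) n (T n)"
  unfolding alvin_terms_def
proof (intro conjI allI impI base_T)
  fix h assume n: "2 \<le> n" "even n" and h: "h < n"
  show "eqc ar3 (EE MA n) (app3 (T n h) vX vX vZ) (app3 (T n (Suc h)) vX vX vZ)" if "odd h"
    using that sC_chainA[OF n(1) n(2) h]
    by (intro eqcI) (auto simp: wf_app3 wf_T evB_T3 evC_T3 n h intro!: sB_chain_MA_L dest: bndD)
  show "eqc ar3 (EE MA n) (app3 (T n h) vX vZ vZ) (app3 (T n (Suc h)) vX vZ vZ)" if "even h"
    using that sC_chainA[OF n(1) n(2) h]
    by (intro eqcI) (auto simp: wf_app3 wf_T evB_T3 evC_T3 n h intro!: sB_chain_MA_R dest: bndD)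
qed



definition VL :: "nat \<Rightarrow> nat \<Rightarrow> int" where "VL n = (\<lambda>k. if k = 2 then int n - 1 else 0)"
definition VR :: "nat \<Rightarrow> nat \<Rightarrow> int" where "VR n = (\<lambda>k. if k = 1 \<or> k = 2 then int n - 1 else 0)"
definition VC :: "nat \<Rightarrow> bool" where "VC = (\<lambda>k. k = 1)"

lemma bnd_VL: "2 \<le> n \<Longrightarrow> bnd n (VL n)" by (simp add: bnd_def VL_def)
lemma bnd_VR: "2 \<le> n \<Longrightarrow> bnd n (VR n)" by (simp add: bnd_def VR_def)

lemma val_XYX: "(\<lambda>k. if k = 0 then VC 0 else if k = 1 then VC 1 else if k = 2 then VC 0 else VC k) = VC"
  by (rule ext) (simp add: VC_def)
lemma val_XXZ: "(\<lambda>k. if k = 0 then VL n 0 else if k = 1 then VL n 0 else if k = 2 then VL n 2 else VL n k) = VL n"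
  by (rule ext) (simp add: VL_def)
lemma val_XZZ: "(\<lambda>k. if k = 0 then VR n 0 else if k = 1 then VR n 2 else if k = 2 then VR n 2 else VR n k) = VR n"
  by (rule ext) (simp add: VR_def)
lemma val_XXZ': "(\<lambda>k. if k = 0 then VR n 0 else if k = 1 then VR n 0 else if k = 2 then VR n 2 else VR n k) = VL n"
  by (rule ext) (simp add: VR_def VL_def)

lemma LR_close:
  assumes n: "2 \<le> n" and b: "base_terms ar3 (EE m n) M t" and h: "h \<le> M"
  shows "\<bar>ev (opB m n) (VL n) (t h) - ev (opB m n) (VR n) (t h)\<bar> \<le> 1"
proof -
  have wf: "wf_trm ar3 (t h)" using b h by (auto simp: base_terms_def ternary_def)
  have "eqc ar3 (EE m n) (app3 (t h) vX vY vX) vX" using b h by (auto simp: base_terms_def)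
  then have "ev (opC m n) VC (app3 (t h) vX vY vX) = ev (opC m n) VC vX" by (rule soundC)
  moreover have "ev (opC m n) VC (app3 (t h) vX vY vX) = ev (opC m n) VC (t h)"
    by (simp only: ev_app3 val_XYX)
  ultimately have "\<not> ev (opC m n) VC (t h)" by (simp add: VC_def)
  moreover have hk: "\<forall>k. \<not> VC k \<longrightarrow> \<bar>VL n k - VR n k\<bar> \<le> 1"
    by (simp add: VC_def VL_def VR_def)
  ultimately show ?thesis using term_compat[OF wf n bnd_VL[OF n] bnd_VR[OF n] hk] by blast
qed

lemma ends:
  assumes n: "2 \<le> n" and b: "base_terms ar3 (EE m n) M t"
  shows "ev (opB m n) (VL n) (t 0) = 0" "ev (opB m n) (VR n) (t 0) = 0"
        "ev (opB m n) (VL n) (t M) = int n - 1" "ev (opB m n) (VR n) (t M) = int n - 1"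
proof -
  have e0: "eqc ar3 (EE m n) (t 0) vX" and eM: "eqc ar3 (EE m n) (t M) vZ"
    using b by (auto simp: base_terms_def)
  have n1: "1 \<le> n" using n by simp
  show "ev (opB m n) (VL n) (t 0) = 0" using soundB[OF e0 n1 bnd_VL[OF n]] by (simp add: VL_def)
  show "ev (opB m n) (VR n) (t 0) = 0" using soundB[OF e0 n1 bnd_VR[OF n]] by (simp add: VR_def)
  show "ev (opB m n) (VL n) (t M) = int n - 1" using soundB[OF eM n1 bnd_VL[OF n]] by (simp add: VL_def)
  show "ev (opB m n) (VR n) (t M) = int n - 1" using soundB[OF eM n1 bnd_VR[OF n]] by (simp add: VR_def)
qed

lemma combJ:
  fixes L R :: "nat \<Rightarrow> int"
  assumes "\<forall>h\<le>M. \<bar>L h - R h\<bar> \<le> 1" "L 0 = 0" "R 0 = 0"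
    "\<forall>h<M. even h \<longrightarrow> L h = L (Suc h)" "\<forall>h<M. odd h \<longrightarrow> R h = R (Suc h)"
  shows "h \<le> M \<Longrightarrow> L h \<le> int h \<and> R h \<le> int h"
proof (induction h)
  case 0 then show ?case using assms by simp
next
  case (Suc h)
  then have "L h \<le> int h \<and> R h \<le> int h" by simp
  moreover have "\<bar>L (Suc h) - R (Suc h)\<bar> \<le> 1" using assms(1) Suc by auto
  moreover have "L h = L (Suc h) \<or> R h = R (Suc h)" using assms(4,5) Suc by (cases "even h") auto
  ultimately show ?case by auto
qed

lemma lowerJ:
  assumes n: "2 \<le> n" and j: "jonsson_terms ar3 (EE m n) (n - 1) t"
  shows False
proof -
  let ?M = "n - 1"
  define L where "L h = ev (opB m n) (VL n) (t h)" for h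
  define R where "R h = ev (opB m n) (VR n) (t h)" for h
  have b: "base_terms ar3 (EE m n) ?M t" using j by (simp add: jonsson_terms_def)
  have n1: "1 \<le> n" using n by simp
  have c1: "\<forall>h\<le>?M. \<bar>L h - R h\<bar> \<le> 1" using LR_close[OF n b] by (simp add: L_def R_def)
  have c4: "\<forall>h<?M. even h \<longrightarrow> L h = L (Suc h)"
  proof (intro allI impI)
    fix h assume "h < ?M" "even h"
    then have "eqc ar3 (EE m n) (app3 (t h) vX vX vZ) (app3 (t (Suc h)) vX vX vZ)"
      using j by (simp add: jonsson_terms_def)
    from soundB[OF this n1 bnd_VL[OF n]] show "L h = L (Suc h)"
      by (simp add: ev_app3 val_XXZ L_def)
  qed
  have c5: "\<forall>h<?M. odd h \<longrightarrow> R h = R (Suc h)"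
  proof (intro allI impI)
    fix h assume "h < ?M" "odd h"
    then have "eqc ar3 (EE m n) (app3 (t h) vX vZ vZ) (app3 (t (Suc h)) vX vZ vZ)"
      using j by (simp add: jonsson_terms_def)
    from soundB[OF this n1 bnd_VR[OF n]] show "R h = R (Suc h)"
      by (simp add: ev_app3 val_XZZ R_def)
  qed
  have e: "L 0 = 0" "R 0 = 0" "L ?M = int n - 1" "R ?M = int n - 1"
    using ends[OF n b] by (simp_all add: L_def R_def)
  have "L (?M - 1) \<le> int (?M - 1) \<and> R (?M - 1) \<le> int (?M - 1)"
    by (rule combJ[OF c1 e(1) e(2) c4 c5]) simp
  moreover have "L (?M - 1) = L ?M \<or> R (?M - 1) = R ?M"
  proof -
    have a: "?M - 1 < ?M" "Suc (?M - 1) = ?M" using n by auto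
    then show ?thesis using c4 c5 by (cases "even (?M - 1)") auto
  qed
  ultimately show False using e n by auto
qed

lemma lowerD:
  assumes n: "2 \<le> n" and j: "directed_jonsson_terms ar3 (EE m n) (n - 1) t"
  shows False
proof -
  let ?M = "n - 1"
  define L where "L h = ev (opB m n) (VL n) (t h)" for h
  define R where "R h = ev (opB m n) (VR n) (t h)" for h
  have b: "base_terms ar3 (EE m n) ?M t" using j by (simp add: directed_jonsson_terms_def)
  have n1: "1 \<le> n" using n by simp
  have c1: "\<forall>h\<le>?M. \<bar>L h - R h\<bar> \<le> 1" using LR_close[OF n b] by (simp add: L_def R_def)
  have c4: "\<forall>h<?M. R h = L (Suc h)"
  proof (intro allI impI)
    fix h assume "h < ?M"
    then have "eqc ar3 (EE m n) (app3 (t h) vX vZ vZ) (app3 (t (Suc h)) vX vX vZ)"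
      using j by (simp add: directed_jonsson_terms_def)
    from soundB[OF this n1 bnd_VR[OF n]] show "R h = L (Suc h)"
      by (simp add: ev_app3 val_XZZ val_XXZ' L_def R_def)
  qed
  have e: "R 0 = 0" "L ?M = int n - 1"
    using ends[OF n b] by (simp_all add: L_def R_def)
  have ind: "h < ?M \<Longrightarrow> R h \<le> int h" for h
  proof (induction h)
    case 0 then show ?case using e by simp
  next
    case (Suc h)
    then have "R h \<le> int h" by simp
    moreover have "\<bar>L (Suc h) - R (Suc h)\<bar> \<le> 1" using c1 Suc by auto
    moreover have "R h = L (Suc h)" using c4 Suc by auto
    ultimately show ?case by auto
  qed
  have "R (?M - 1) \<le> int (?M - 1)" by (rule ind) (use n in simp)
  moreover have "int (?M - 1) = int n - 2" using n by (simp add: of_nat_diff)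
  moreover have "R (?M - 1) = L ?M"
  proof -
    have a: "?M - 1 < ?M" "Suc (?M - 1) = ?M" using n by auto
    then show ?thesis using c4 by metis
  qed
  ultimately show False using e n by simp
qed



lemma finite_image_factor:
  assumes "finite (g ` A)" "\<And>x y. x \<in> A \<Longrightarrow> y \<in> A \<Longrightarrow> g x = g y \<Longrightarrow> f x = f y"
  shows "finite (f ` A)"
proof -
  have "f ` A \<subseteq> (\<lambda>z. f (inv_into A g z)) ` (g ` A)"
  proof
    fix w assume "w \<in> f ` A"
    then obtain x where x: "x \<in> A" "w = f x" by auto
    have "inv_into A g (g x) \<in> A" "g (inv_into A g (g x)) = g x"
      using x by (auto intro: inv_into_into f_inv_into_f)
    then have "f (inv_into A g (g x)) = f x" using assms(2) x by blast
    then show "w \<in> (\<lambda>z. f (inv_into A g z)) ` (g ` A)" using x by (metis image_eqI)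
  qed
  then show ?thesis using assms(1) finite_subset by blast
qed

lemma eqc_sym_trans_cls:
  assumes "eqc ar E s t"
  shows "{u. wf_trm ar u \<and> vars u \<subseteq> {..<k} \<and> eqc ar E u s} = {u. wf_trm ar u \<and> vars u \<subseteq> {..<k} \<and> eqc ar E u t}"
  using assms by (auto intro: eqc_trans eqc_sym)

lemma lf_EE:
  assumes n: "1 \<le> n"
  shows "locally_finite ar3 (EE m n)"
  unfolding locally_finite_def
proof
  fix k
  let ?T = "{t. wf_trm ar3 t \<and> vars t \<subseteq> {..<k}}"
  let ?XB = "{xs. set xs \<subseteq> {0..int n - 1} \<and> length xs = k}"
  let ?XC = "{bs :: bool list. set bs \<subseteq> UNIV \<and> length bs = k}"
  define vb where "vb xs = (\<lambda>i. if i < k then xs ! i else (0::int))" for xs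
  define vcc where "vcc bs = (\<lambda>i. if i < k then bs ! i else False)" for bs
  define sig where "sig t = (restrict (\<lambda>xs. ev (opB m n) (vb xs) t) ?XB,
                              restrict (\<lambda>bs. ev (opC m n) (vcc bs) t) ?XC)" for t
  have fin: "finite (sig ` ?T)"
  proof (rule finite_subset)
    show "sig ` ?T \<subseteq> (\<Pi>\<^sub>E xs\<in>?XB. {0..int n - 1}) \<times> (\<Pi>\<^sub>E bs\<in>?XC. (UNIV :: bool set))"
    proof
      fix p assume "p \<in> sig ` ?T"
      then obtain t where p: "p = sig t" by auto
      have "bnd n (vb xs)" if "xs \<in> ?XB" for xs
        using that n nth_mem[of _ xs] by (auto simp: bnd_def vb_def subset_iff)
      then show "p \<in> (\<Pi>\<^sub>E xs\<in>?XB. {0..int n - 1}) \<times> (\<Pi>\<^sub>E bs\<in>?XC. (UNIV :: bool set))"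
        using evB_bnd[OF n] by (auto simp: p sig_def)
    qed
    show "finite ((\<Pi>\<^sub>E xs\<in>?XB. {0..int n - 1}) \<times> (\<Pi>\<^sub>E bs\<in>?XC. (UNIV :: bool set)))"
      by (intro finite_cartesian_product finite_PiE finite_lists_length_eq) (auto simp: finite_class.finite_UNIV)
  qed
  have key: "(\<lambda>t. {s. wf_trm ar3 s \<and> vars s \<subseteq> {..<k} \<and> eqc ar3 (EE m n) s t}) s =
             (\<lambda>t. {s. wf_trm ar3 s \<and> vars s \<subseteq> {..<k} \<and> eqc ar3 (EE m n) s t}) t"
    if st: "s \<in> ?T" "t \<in> ?T" "sig s = sig t" for s t
  proof -
    have "eqc ar3 (EE m n) s t"
    proof (rule eqcI)
      show "wf_trm ar3 s" "wf_trm ar3 t" using st by auto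
      fix v :: "nat \<Rightarrow> int"
      assume bv: "bnd n v"
      let ?xs = "map v [0..<k]"
      have xs: "?xs \<in> ?XB" using bv by (auto simp: bnd_def)
      have loc: "ev (opB m n) v u = ev (opB m n) (vb ?xs) u" if "u \<in> ?T" for u
        using that by (intro ev_local) (auto simp: vb_def)
      have "ev (opB m n) (vb ?xs) s = ev (opB m n) (vb ?xs) t"
        using st(3) xs unfolding sig_def by (metis (no_types, lifting) fst_conv restrict_apply')
      then show "ev (opB m n) v s = ev (opB m n) v t" using loc st by auto
    next
      fix v :: "nat \<Rightarrow> bool"
      let ?bs = "map v [0..<k]"
      have bs: "?bs \<in> ?XC" by auto
      have loc: "ev (opC m n) v u = ev (opC m n) (vcc ?bs) u" if "u \<in> ?T" for u
        using that by (intro ev_local) (auto simp: vcc_def)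
      have "ev (opC m n) (vcc ?bs) s = ev (opC m n) (vcc ?bs) t"
        using st(3) bs unfolding sig_def by (metis (no_types, lifting) snd_conv restrict_apply')
      then show "ev (opC m n) v s = ev (opC m n) v t" using loc st by auto
    qed
    then show ?thesis by (simp add: eqc_sym_trans_cls)
  qed
  show "finite ((\<lambda>t. {s. wf_trm ar3 s \<and> vars s \<subseteq> {..<k} \<and> eqc ar3 (EE m n) s t}) ` ?T)"
    by (rule finite_image_factor[OF fin]) (rule key)
qed


theorem corollary6p3:
  shows "(\<forall>n::nat. 2 \<le> n \<and> even n \<longrightarrow>
            (\<exists>(ar :: nat \<Rightarrow> nat) (E :: (nat trm \<times> nat trm) set).
               variety ar E \<and> locally_finite ar E \<and> specular_n_distributive ar E n \<and>
               \<not> n_distributive ar E (n - 1)) \<and>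
            (\<exists>(ar :: nat \<Rightarrow> nat) (E :: (nat trm \<times> nat trm) set).
               variety ar E \<and> locally_finite ar E \<and> specular_n_alvin ar E n \<and>
               \<not> n_distributive ar E (n - 1))) \<and>
         (\<forall>n::nat. 2 \<le> n \<longrightarrow>
            (\<exists>(ar :: nat \<Rightarrow> nat) (E :: (nat trm \<times> nat trm) set).
               variety ar E \<and> locally_finite ar E \<and> specular_n_directed_distributive ar E n \<and>
               \<not> n_directed_distributive ar E (n - 1)))"
proof (intro conjI allI impI)
  fix n :: nat
  assume a: "2 \<le> n \<and> even n"
  then have n: "2 \<le> n" "even n" "1 \<le> n" by auto
  show "\<exists>(ar :: nat \<Rightarrow> nat) (E :: (nat trm \<times> nat trm) set).
               variety ar E \<and> locally_finite ar E \<and> specular_n_distributive ar E n \<and>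
               \<not> n_distributive ar E (n - 1)"
    using variety_EE lf_EE[OF n(3)] jon_T[OF n(1) n(2)] spec_T[OF n(1)] lowerJ[OF n(1)]
    unfolding specular_n_distributive_def n_distributive_def by blast
  show "\<exists>(ar :: nat \<Rightarrow> nat) (E :: (nat trm \<times> nat trm) set).
               variety ar E \<and> locally_finite ar E \<and> specular_n_alvin ar E n \<and>
               \<not> n_distributive ar E (n - 1)"
    using variety_EE lf_EE[OF n(3)] alv_T[OF n(1) n(2)] spec_T[OF n(1)] lowerJ[OF n(1)]
    unfolding specular_n_alvin_def n_distributive_def by blast
next
  fix n :: nat
  assume n: "2 \<le> n"
  then have n1: "1 \<le> n" by simp
  show "\<exists>(ar :: nat \<Rightarrow> nat) (E :: (nat trm \<times> nat trm) set).
               variety ar E \<and> locally_finite ar E \<and> specular_n_directed_distributive ar E n \<and>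
               \<not> n_directed_distributive ar E (n - 1)"
    using variety_EE lf_EE[OF n1] dir_T[OF n] spec_T[OF n] lowerD[OF n]
    unfolding specular_n_directed_distributive_def n_directed_distributive_def by blast
qed

end
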